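(* Let $u,v>0$ and $0<a\le 1$, and consider the map $(x,y)\mapsto\big((1-a)x+auy(1-y),\ (1-a)y+avx(1-x)\big)$ (Kopel's map with $b=a$). Define $R_1=u^2v^2-4u^2v-4uv^2+18uv-27$ and $H_3=a^3u^3v^3-4a^3u^3v^2-4a^3u^2v^3+17a^3u^2v^2+4a^3u^2v+4a^3uv^2-2a^2u^2v^2-45a^3uv+8a^2u^2v+8a^2uv^2-36a^2uv+27a^3-4auv+54a^2+36a+8$. If either ($uv>1$, $R_1<0$, $H_3>0$) or ($uv>1$, $R_1>0$, $H_3<0$), then the map has exactly one locally stable positive equilibrium.
   Context: An equilibrium is a real fixed point $(x^*,y^* )$; it is positive if $x^*,y^*>0$. It is called (locally) stable if both eigenvalues of the Jacobian $\begin{pmatrix}1-a & ua(1-2y^* )\\ va(1-2x^* ) & 1-a\end{pmatrix}$ at it have modulus less than $1$, equivalently the Jury conditions $1-\mathrm{Tr}(J)+\mathrm{Det}(J)>0$, $1+\mathrm{Tr}(J)+\mathrm{Det}(J)>0$, $1-\mathrm{Det}(J)>0$ hold. *)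

theory Defs
  imports Complex_Main
begin

definition kopel :: "real \<Rightarrow> real \<Rightarrow> real \<Rightarrow> real \<times> real \<Rightarrow> real \<times> real" where
  "kopel u v a p = (case p of (x, y) \<Rightarrow>
     ((1 - a) * x + a * u * y * (1 - y), (1 - a) * y + a * v * x * (1 - x)))"

definition is_equilibrium :: "real \<Rightarrow> real \<Rightarrow> real \<Rightarrow> real \<times> real \<Rightarrow> bool" where
  "is_equilibrium u v a p \<longleftrightarrow> kopel u v a p = p"

definition positive_point :: "real \<times> real \<Rightarrow> bool" where
  "positive_point p \<longleftrightarrow> fst p > 0 \<and> snd p > 0"

text \<open>Jacobian entries at (x,y): J = [[j11, j12],[j21, j22]].\<close>
definition jac :: "real \<Rightarrow> real \<Rightarrow> real \<Rightarrow> real \<times> real \<Rightarrow> real \<times> real \<times> real \<times> real" where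
  "jac u v a p = (case p of (x, y) \<Rightarrow>
     (1 - a, u * a * (1 - 2 * y), v * a * (1 - 2 * x), 1 - a))"

definition is_eigenvalue :: "real \<Rightarrow> real \<Rightarrow> real \<Rightarrow> real \<times> real \<Rightarrow> complex \<Rightarrow> bool" where
  "is_eigenvalue u v a p lam \<longleftrightarrow> (case jac u v a p of (j11, j12, j21, j22) \<Rightarrow>
     (of_real j11 - lam) * (of_real j22 - lam) - of_real j12 * of_real j21 = 0)"

definition locally_stable :: "real \<Rightarrow> real \<Rightarrow> real \<Rightarrow> real \<times> real \<Rightarrow> bool" where
  "locally_stable u v a p \<longleftrightarrow> (\<forall>lam. is_eigenvalue u v a p lam \<longrightarrow> cmod lam < 1)"

definition R1 :: "real \<Rightarrow> real \<Rightarrow> real" where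
  "R1 u v = u^2*v^2 - 4*u^2*v - 4*u*v^2 + 18*u*v - 27"

definition H3 :: "real \<Rightarrow> real \<Rightarrow> real \<Rightarrow> real" where
  "H3 u v a = a^3*u^3*v^3 - 4*a^3*u^3*v^2 - 4*a^3*u^2*v^3 + 17*a^3*u^2*v^2
     + 4*a^3*u^2*v + 4*a^3*u*v^2 - 2*a^2*u^2*v^2 - 45*a^3*u*v + 8*a^2*u^2*v
     + 8*a^2*u*v^2 - 36*a^2*u*v + 27*a^3 - 4*a*u*v + 54*a^2 + 36*a + 8"

end

theory Submission imports Defs begin

lemma eig_cond:
  fixes c d :: real
  shows "(\<forall>lam::complex. (of_real c - lam)^2 = of_real d \<longrightarrow> cmod lam < 1) \<longleftrightarrow>
    (if d \<ge> 0 then \<bar>c + sqrt d\<bar> < 1 \<and> \<bar>c - sqrt d\<bar> < 1 else c^2 - d < 1)"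
proof (cases "d \<ge> 0")
  case True
  have e: "(of_real c - lam)^2 = of_real d \<longleftrightarrow> lam = of_real (c - sqrt d) \<or> lam = of_real (c + sqrt d)" for lam :: complex
  proof -
    have "of_real d = (of_real (sqrt d) :: complex)^2" using True by (simp flip: of_real_power)
    then have "(of_real c - lam)^2 = of_real d \<longleftrightarrow> (of_real c - lam) = of_real (sqrt d) \<or> (of_real c - lam) = - of_real (sqrt d)"
      by (simp add: power2_eq_iff)
    also have "\<dots> \<longleftrightarrow> lam = of_real (c - sqrt d) \<or> lam = of_real (c + sqrt d)"
      by (auto simp: algebra_simps)
    finally show ?thesis .
  qed
  have "(\<forall>lam::complex. (of_real c - lam)^2 = of_real d \<longrightarrow> cmod lam < 1) \<longleftrightarrow>
     cmod (of_real (c - sqrt d) :: complex) < 1 \<and> cmod (of_real (c + sqrt d) :: complex) < 1"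
    unfolding e by blast
  then show ?thesis using True by (simp only: norm_of_real) auto
next
  case False
  define b where "b = sqrt (- d)"
  have b2: "b^2 = - d" using False by (simp add: b_def)
  have e: "(of_real c - lam)^2 = of_real d \<longleftrightarrow> lam = Complex c (-b) \<or> lam = Complex c b" for lam :: complex
  proof -
    have "of_real d = (\<i> * of_real b :: complex)^2" using b2
      by (simp add: power_mult_distrib flip: of_real_power)
    then have "(of_real c - lam)^2 = of_real d \<longleftrightarrow> (of_real c - lam) = \<i> * of_real b \<or> (of_real c - lam) = - (\<i> * of_real b)"
      by (simp add: power2_eq_iff)
    also have "\<dots> \<longleftrightarrow> lam = Complex c (-b) \<or> lam = Complex c b"
      by (auto simp: complex_eq_iff)
    finally show ?thesis .
  qed
  have n: "cmod (Complex c b) < 1 \<longleftrightarrow> c^2 - d < 1" "cmod (Complex c (-b)) < 1 \<longleftrightarrow> c^2 - d < 1"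
    using b2 by (simp_all add: cmod_def)
  have "(\<forall>lam::complex. (of_real c - lam)^2 = of_real d \<longrightarrow> cmod lam < 1) \<longleftrightarrow>
     cmod (Complex c (-b)) < 1 \<and> cmod (Complex c b) < 1"
    unfolding e by blast
  then show ?thesis using False n by simp
qed


lemma stabP:
  fixes a P :: real
  assumes a0: "0 < a" and a1: "a \<le> 1"
  shows "(if a^2*P \<ge> 0 then \<bar>(1-a) + sqrt (a^2*P)\<bar> < 1 \<and> \<bar>(1-a) - sqrt (a^2*P)\<bar> < 1
          else (1-a)^2 - a^2*P < 1) \<longleftrightarrow> (1 - 2/a < P \<and> P < 1)"
proof (cases "P \<ge> 0")
  case True
  define r where "r = sqrt P"
  have r0: "r \<ge> 0" and rP: "r^2 = P" using True by (auto simp: r_def)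
  have sq: "sqrt (a^2*P) = a*r" using a0 True by (simp add: r_def real_sqrt_mult)
  have ge: "a^2*P \<ge> 0" using True by simp
  have ar0: "a*r \<ge> 0" using a0 r0 by simp
  have "P < 1 \<longleftrightarrow> r < 1"
  proof
    assume "P < 1" then show "r < 1" using rP r0 abs_square_less_1[of r] by simp
  next
    assume "r < 1" then show "P < 1" using rP r0 abs_square_less_1[of r] by simp
  qed
  moreover have "\<bar>(1-a) + a*r\<bar> < 1 \<and> \<bar>(1-a) - a*r\<bar> < 1 \<longleftrightarrow> r < 1"
  proof
    assume h: "\<bar>(1-a) + a*r\<bar> < 1 \<and> \<bar>(1-a) - a*r\<bar> < 1"
    then have "a*r < a*1" using a1 ar0 by (simp add: abs_less_iff)
    then show "r < 1" using a0 by simp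
  next
    assume "r < 1"
    then have "a*r < a" using a0 by simp
    then show "\<bar>(1-a) + a*r\<bar> < 1 \<and> \<bar>(1-a) - a*r\<bar> < 1" using a1 a0 ar0 unfolding abs_less_iff by linarith
  qed
  moreover have "1 - 2/a < P"
  proof -
    have "2/a \<ge> 2" using a0 a1 by (simp add: field_simps)
    then show ?thesis using True by linarith
  qed
  ultimately show ?thesis using ge sq by simp
next
  case False
  have ng: "\<not> a^2*P \<ge> 0" using False a0 by (simp add: zero_le_mult_iff)
  have "(1-a)^2 - a^2*P < 1 \<longleftrightarrow> a*(a*P + 2 - a) > 0" by (simp add: algebra_simps power2_eq_square)
  also have "\<dots> \<longleftrightarrow> a*P + 2 - a > 0" using a0 by (simp add: zero_less_mult_iff)
  also have "\<dots> \<longleftrightarrow> 1 - 2/a < P" using a0 by (simp add: field_simps)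
  finally show ?thesis using ng False by simp
qed

lemma stable_iff:
  fixes u v a x y :: real
  assumes a0: "0 < a" and a1: "a \<le> 1"
  shows "locally_stable u v a (x,y) \<longleftrightarrow> (1 - 2/a < u*v*(1-2*x)*(1-2*y) \<and> u*v*(1-2*x)*(1-2*y) < 1)"
proof -
  define P where "P = u*v*(1-2*x)*(1-2*y)"
  have e: "is_eigenvalue u v a (x,y) lam \<longleftrightarrow> (of_real (1-a) - lam)^2 = of_real (a^2*P)" for lam
  proof -
    have "(of_real (1-a) - lam) * (of_real (1-a) - lam) - of_real (u*a*(1-2*y)) * of_real (v*a*(1-2*x))
       = (of_real (1-a) - lam)^2 - of_real (a^2*P)"
      unfolding P_def by (simp add: power2_eq_square algebra_simps flip: of_real_mult)
    moreover have "is_eigenvalue u v a (x,y) lam \<longleftrightarrow> (of_real (1-a) - lam) * (of_real (1-a) - lam) - of_real (u*a*(1-2*y)) * of_real (v*a*(1-2*x)) = 0"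
      unfolding is_eigenvalue_def jac_def by (simp only: prod.case)
    ultimately show ?thesis by (simp only: right_minus_eq)
  qed
  have "locally_stable u v a (x,y) \<longleftrightarrow> (\<forall>lam::complex. (of_real (1-a) - lam)^2 = of_real (a^2*P) \<longrightarrow> cmod lam < 1)"
    unfolding locally_stable_def e by simp
  also have "\<dots> \<longleftrightarrow> (1 - 2/a < P \<and> P < 1)"
    unfolding eig_cond using stabP[OF a0 a1] by simp
  finally show ?thesis unfolding P_def .
qed

definition fS :: "real \<Rightarrow> real \<Rightarrow> real \<Rightarrow> real" where
  "fS u v s = u*v*(1+s)*(4 - v + v*s^2) - 8"
definition qq :: "real \<Rightarrow> real \<Rightarrow> real \<Rightarrow> real" where
  "qq v s0 z = v*z^2 + v*(1+s0)*z + v*(s0^2+s0) + 4 - v"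
definition dq :: "real \<Rightarrow> real \<Rightarrow> real" where
  "dq v s = 3*v*s^2 + 2*v*s + 4 - v"
definition Gh :: "real \<Rightarrow> real \<Rightarrow> real \<Rightarrow> real" where
  "Gh v a s = 4*a*s*(2-v+v*s^2)+(2-a)*(1+s)*(4-v+v*s^2)"
definition discq :: "real \<Rightarrow> real \<Rightarrow> real" where
  "discq v s = v*(v*(5-2*s-3*s^2) - 16)"
definition g1 :: "real \<Rightarrow> real \<Rightarrow> real \<Rightarrow> real" where
  "g1 v a s = 4*a*(v*(1+s) - 2)"
definition g0 :: "real \<Rightarrow> real \<Rightarrow> real \<Rightarrow> real" where
  "g0 v a s = v*(3*a*s^3 + 7*a*s^2 + a*s - 3*a + 2*s^3+2*s^2-2*s-2) + 12*a*s + 12*a + 8*s + 8"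
definition NN :: "real \<Rightarrow> real \<Rightarrow> real \<Rightarrow> real" where
  "NN v a s = v*(g0 v a s)^2 - v*(1+s)*(g0 v a s)*(g1 v a s) + (v*(s^2+s)+4-v)*(g1 v a s)^2"

lemma L1: "fS u v z = fS u v s0 + u*v*(z - s0)*qq v s0 z"
  unfolding fS_def qq_def by algebra
lemma L2: "4*v*qq v s0 z = (2*v*z + v*(1+s0))^2 - discq v s0"
  unfolding qq_def discq_def by algebra
lemma L3:
  assumes "fS u v s = 0"
  shows "discq v s * (dq v s)^2 * u^2 = 64 * R1 u v"
proof -
  have "discq v s * (dq v s)^2 * u^2 - 64 * R1 u v = fS u v s * (- 27*u*v^2*s^3 - 27*u*v^2*s^2 + 27*u*v^2*s - 5*u*v^2 - 108*u*v*s + 36*u*v - 216)"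
    unfolding R1_def discq_def dq_def fS_def by algebra
  then show ?thesis using assms by simp
qed
lemma L4: "Gh v a z = ((3*a+2)*(z-s0) - 4*a) * qq v s0 z + g1 v a s0 * z + g0 v a s0"
  unfolding Gh_def qq_def g1_def g0_def by algebra
lemma L5:
  assumes "fS u v s = 0"
  shows "Gh v a s * NN v a s * u^3 * v^2 = 512 * H3 u v a"
proof -
  have "Gh v a s * NN v a s * u^3 * v^2 - 512 * H3 u v a = fS u v s * (27*u^2*v^4*a^3*s^6 + 54*u^2*v^4*a^3*s^5 - 27*u^2*v^4*a^3*s^4 - 76*u^2*v^4*a^3*s^3 + 5*u^2*v^4*a^3*s^2 + 22*u^2*v^4*a^3*s - 5*u^2*v^4*a^3 + 54*u^2*v^4*a^2*s^6 + 108*u^2*v^4*a^2*s^5 - 54*u^2*v^4*a^2*s^4 - 152*u^2*v^4*a^2*s^3 + 10*u^2*v^4*a^2*s^2 + 44*u^2*v^4*a^2*s - 10*u^2*v^4*a^2 + 36*u^2*v^4*a*s^6 + 72*u^2*v^4*a*s^5 - 36*u^2*v^4*a*s^4 - 144*u^2*v^4*a*s^3 - 36*u^2*v^4*a*s^2 + 72*u^2*v^4*a*s + 36*u^2*v^4*a + 8*u^2*v^4*s^6 + 16*u^2*v^4*s^5 - 8*u^2*v^4*s^4 - 32*u^2*v^4*s^3 - 8*u^2*v^4*s^2 + 16*u^2*v^4*s + 8*u^2*v^4 + 216*u^2*v^3*a^3*s^4 + 72*u^2*v^3*a^3*s^3 - 360*u^2*v^3*a^3*s^2 + 56*u^2*v^3*a^3*s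 + 16*u^2*v^3*a^3 + 432*u^2*v^3*a^2*s^4 + 576*u^2*v^3*a^2*s^3 - 288*u^2*v^3*a^2*s^2 - 320*u^2*v^3*a^2*s + 112*u^2*v^3*a^2 + 288*u^2*v^3*a*s^4 + 544*u^2*v^3*a*s^3 - 32*u^2*v^3*a*s^2 - 544*u^2*v^3*a*s - 256*u^2*v^3*a + 64*u^2*v^3*s^4 + 128*u^2*v^3*s^3 - 128*u^2*v^3*s - 64*u^2*v^3 + 432*u^2*v^2*a^3*s^2 - 576*u^2*v^2*a^3*s + 80*u^2*v^2*a^3 + 864*u^2*v^2*a^2*s^2 + 576*u^2*v^2*a^2*s - 416*u^2*v^2*a^2 + 576*u^2*v^2*a*s^2 + 1024*u^2*v^2*a*s + 448*u^2*v^2*a + 128*u^2*v^2*s^2 + 256*u^2*v^2*s + 128*u^2*v^2 + 256*u^2*v*a^3 + 512*u^2*v*a^2 + 216*u*v^2*a^3*s^3 + 216*u*v^2*a^3*s^2 - 216*u*v^2*a^3*s + 40*u*v^2*a^3 + 432*u*v^2*a^2*s^3 + 432*u*v^2*a^2*s^2 - 432*u*v^2*a^2*s + 80*u*v^2*a^2 + 288*u*v^2*a*s^3 + 288*u*v^2*a*s^2 - 288*u*v^2*a*s - 288*u*v^2*a + 64*u*v^2*s^3 + 64*u*v^2*s^2 - 64*u*v^2*s - 64*u*v^2 + 864*u*v*a^3*s - 2016*u*v*a^3 + 1728*u*v*a^2*s - 576*u*v*a^2 + 1152*u*v*a*s + 896*u*v*a + 256*u*v*s + 256*u*v + 1728*a^3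 + 3456*a^2 + 2304*a + 512)"
    unfolding H3_def Gh_def NN_def g1_def g0_def fS_def by algebra
  then show ?thesis using assms by simp
qed
lemma L6: "4*v*NN v a s = (2*v*g0 v a s - v*(1+s)*g1 v a s)^2 - discq v s * (g1 v a s)^2"
  unfolding NN_def discq_def by algebra
lemma L7: "NN v a s0 = v*(g1 v a s0 * s2 + g0 v a s0)*(g1 v a s0 * (-1-s0-s2) + g0 v a s0) + (g1 v a s0)^2 * qq v s0 s2"
  unfolding NN_def qq_def by algebra
lemma L8: "qq v s0 (-1-s0-s2) = qq v s0 s2"
  unfolding qq_def by algebra
lemma L9: "qq v s1 z = v*(z-s2)*(z-(-1-s1-s2)) + qq v s1 s2"
  unfolding qq_def by algebra
lemma L10: "dq v y = v*(y-s1)*(2*y+1+s1) + qq v s1 y"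
  unfolding qq_def dq_def by algebra
lemma dq_qq: "dq v s = qq v s s"
  unfolding qq_def dq_def by algebra


lemma root_range:
  assumes u0: "u > 0" and v0: "v > 0" and uv: "u*v > 1" and f: "fS u v s = 0"
  shows "-1 < s \<and> s < 1"
proof -
  define W where "W = 4 - v + v*s^2"
  have e: "u*v*((1+s)*W) = 8" using f unfolding fS_def W_def by (simp add: algebra_simps)
  have "s < 1"
  proof (rule ccontr)
    assume "\<not> s < 1"
    then have s1: "s \<ge> 1" by simp
    then have "s^2 \<ge> 1" by (simp add: one_le_power)
    then have "v*(s^2 - 1) \<ge> 0" using v0 by simp
    then have W4: "W \<ge> 4" unfolding W_def by (simp add: algebra_simps)
    have "(1+s)*W \<ge> 2*4" using s1 W4 by (intro mult_mono) auto
    then have "u*v*((1+s)*W) \<ge> u*v*8" using uv by (intro mult_left_mono) auto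
    then show False using e uv by simp
  qed
  moreover have "-1 < s"
  proof (rule ccontr)
    assume "\<not> -1 < s"
    then have s1: "s \<le> -1" by simp
    then have "1 \<le> s^2" using abs_le_square_iff[of 1 s] by simp
    then have "v*(s^2 - 1) \<ge> 0" using v0 by simp
    then have W4: "W \<ge> 4" unfolding W_def by (simp add: algebra_simps)
    have "(1+s)*W \<le> 0" using s1 W4 by (intro mult_nonpos_nonneg) auto
    then have "u*v*((1+s)*W) \<le> 0" using u0 v0 by (simp add: mult_nonneg_nonpos)
    then show False using e by simp
  qed
  ultimately show ?thesis by simp
qed

lemma PK:
  assumes f: "fS u v s = 0"
  defines "x \<equiv> (1-s)/2"
  defines "y \<equiv> v*x*(1-x)"
  defines "P \<equiv> u*v*(1-2*x)*(1-2*y)"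
  defines "K \<equiv> (1+s)*(1+(1-2*y))"
  shows "dq v s * (1-s) = 2*K*(1-P)" and "Gh v a s = 2*K*(a*P + 2 - a)" and "u*v*K = 4"
proof -
  define t where "t = 1 - 2*y"
  have ht: "2*t = 2 - v + v*s^2" unfolding t_def y_def x_def by (simp add: field_simps power2_eq_square)
  have K: "K = (1+s)*(1+t)" unfolding K_def t_def by simp
  have f': "u*v*(1+s)*(4 - v + v*s^2) = 8" using f unfolding fS_def by simp
  have "2*(u*v*((1+s)*(1+t))) = u*v*(1+s)*(2 + 2*t)" by (simp add: algebra_simps)
  also have "\<dots> = u*v*(1+s)*(4 - v + v*s^2)" using ht by simp
  also have "\<dots> = 8" by (rule f')
  finally have "2*(u*v*((1+s)*(1+t))) = 8" .
  then show uvK: "u*v*K = 4" unfolding K by simp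
  have PK: "P*K = 4*s*t"
  proof -
    have hx: "1-2*x = s" by (simp add: x_def field_simps)
    have "P = u*v*s*t" unfolding P_def hx t_def by simp
    then have "P*K = (u*v*K)*s*t" by (simp add: algebra_simps)
    then show ?thesis using uvK by simp
  qed
  have "dq v s * (1-s) = 2*K - 8*s*t" using ht unfolding dq_def K by algebra
  then show "dq v s * (1-s) = 2*K*(1-P)" using PK by (simp add: algebra_simps)
  have "Gh v a s = 8*a*s*t + 2*(2-a)*K" using ht unfolding Gh_def K by algebra
  then show "Gh v a s = 2*K*(a*P + 2 - a)" using PK by (simp add: algebra_simps)
qed

lemma stab_s:
  assumes u0: "u > 0" and v0: "v > 0" and uv: "u*v > 1" and a0: "0 < a" and a1: "a \<le> 1"
    and f: "fS u v s = 0"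
  shows "locally_stable u v a ((1-s)/2, v*((1-s)/2)*(1-(1-s)/2)) \<longleftrightarrow> dq v s > 0 \<and> Gh v a s > 0"
proof -
  define x where "x = (1-s)/2"
  define y where "y = v*x*(1-x)"
  define P where "P = u*v*(1-2*x)*(1-2*y)"
  define K where "K = (1+s)*(1+(1-2*y))"
  have r: "-1 < s" "s < 1" using root_range[OF u0 v0 uv f] by auto
  have e1: "dq v s * (1-s) = 2*K*(1-P)" and e2: "Gh v a s = 2*K*(a*P + 2 - a)" and e3: "u*v*K = 4"
    using PK(1,3)[OF f] PK(2)[OF f, of a] unfolding x_def y_def P_def K_def by auto
  have K0: "K > 0"
  proof -
    have "u*v > 0" using u0 v0 by simp
    then have "K = 4/(u*v)" using e3 u0 v0 by (simp add: eq_divide_eq mult.commute)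
    then show ?thesis using \<open>u*v>0\<close> by simp
  qed
  have "dq v s > 0 \<longleftrightarrow> dq v s * (1-s) > 0" using r by (simp add: zero_less_mult_iff)
  also have "\<dots> \<longleftrightarrow> P < 1" unfolding e1 using K0 by (simp add: zero_less_mult_iff)
  finally have A: "dq v s > 0 \<longleftrightarrow> P < 1" .
  have "Gh v a s > 0 \<longleftrightarrow> a*P + 2 - a > 0" unfolding e2 using K0 by (simp add: zero_less_mult_iff)
  also have "\<dots> \<longleftrightarrow> 1 - 2/a < P" using a0 by (simp add: field_simps)
  finally have B: "Gh v a s > 0 \<longleftrightarrow> 1 - 2/a < P" .
  show ?thesis unfolding stable_iff[OF a0 a1] A B x_def[symmetric] y_def[symmetric] P_def by auto
qed

lemma dq_neg:
  assumes u0: "u > 0" and v0: "v > 0" and uv: "u*v > 1" and a0: "0 < a"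
    and f: "fS u v s = 0" and d: "dq v s < 0"
  shows "Gh v a s > 0"
proof -
  define x where "x = (1-s)/2"
  define y where "y = v*x*(1-x)"
  define P where "P = u*v*(1-2*x)*(1-2*y)"
  define K where "K = (1+s)*(1+(1-2*y))"
  have r: "-1 < s" "s < 1" using root_range[OF u0 v0 uv f] by auto
  have e1: "dq v s * (1-s) = 2*K*(1-P)" and e2: "Gh v a s = 2*K*(a*P + 2 - a)" and e3: "u*v*K = 4"
    using PK(1,3)[OF f] PK(2)[OF f, of a] unfolding x_def y_def P_def K_def by auto
  have K0: "K > 0"
  proof -
    have "u*v > 0" using u0 v0 by simp
    then have "K = 4/(u*v)" using e3 u0 v0 by (simp add: eq_divide_eq mult.commute)
    then show ?thesis using \<open>u*v>0\<close> by simp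
  qed
  have "dq v s * (1-s) < 0" using d r by (simp add: mult_neg_pos)
  then have "1 - P < 0" unfolding e1 using K0 by (simp add: mult_less_0_iff)
  then have "a*1 < a*P" using a0 by simp
  then have "a*P + 2 - a > 0" by simp
  then show ?thesis unfolding e2 using K0 by simp
qed

lemma three:
  assumes u0: "u > 0" and v0: "v > 0"
    and f1: "fS u v s1 = 0" and f2: "fS u v s2 = 0" and d1: "dq v s1 \<noteq> 0" and d2: "dq v s2 \<noteq> 0"
    and ne: "s1 \<noteq> s2"
  defines "s3 \<equiv> -1-s1-s2"
  shows "fS u v s3 = 0" and "dq v s1 * dq v s2 * dq v s3 < 0"
    and "Gh v a s1 * Gh v a s2 * Gh v a s3 * (v^3*u^3) = 512 * H3 u v a"
proof -
  have "u*v*(s2 - s1)*qq v s1 s2 = 0" using L1[of u v s2 s1] f1 f2 by simp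
  then have q2: "qq v s1 s2 = 0" using u0 v0 ne by simp
  have q3: "qq v s1 s3 = 0" using L8[of v s1 s2] q2 unfolding s3_def by simp
  show f3: "fS u v s3 = 0" using L1[of u v s3 s1] f1 q3 by simp
  have e1: "dq v s1 = v*(s1-s2)*(s1-s3)" using dq_qq[of v s1] L9[of v s1 s1 s2] q2 unfolding s3_def by simp
  have e2: "dq v s2 = v*(s2-s1)*(s2-s3)" using L10[of v s2 s1] q2 unfolding s3_def by (simp add: algebra_simps)
  have e3: "dq v s3 = v*(s3-s1)*(s3-s2)" using L10[of v s3 s1] q3 unfolding s3_def by (simp add: algebra_simps)
  have n13: "s1 \<noteq> s3" using d1 e1 by auto
  have n23: "s2 \<noteq> s3" using d2 e2 by auto
  have "dq v s1 * dq v s2 * dq v s3 = - (v^3 * ((s1-s2)*(s1-s3)*(s2-s3))^2)"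
    unfolding e1 e2 e3 by algebra
  moreover have "v^3 * ((s1-s2)*(s1-s3)*(s2-s3))^2 > 0" using v0 ne n13 n23 by simp
  ultimately show "dq v s1 * dq v s2 * dq v s3 < 0" by simp
  have G2: "Gh v a s2 = g1 v a s1 * s2 + g0 v a s1" using L4[of v a s2 s1] q2 by simp
  have G3: "Gh v a s3 = g1 v a s1 * s3 + g0 v a s1" using L4[of v a s3 s1] q3 by simp
  have N: "NN v a s1 = v * Gh v a s2 * Gh v a s3" using L7[of v a s1 s2] q2 G2 G3 unfolding s3_def by simp
  show "Gh v a s1 * Gh v a s2 * Gh v a s3 * (v^3*u^3) = 512 * H3 u v a"
    using L5[OF f1, of a] unfolding N by (simp add: algebra_simps power2_eq_square power3_eq_cube)
qed


lemma eq_char: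
  assumes u0: "u > 0" and v0: "v > 0" and a0: "a > 0" and uv: "u*v > 1"
  shows "is_equilibrium u v a (x,y) \<and> positive_point (x,y) \<longleftrightarrow> y = v*x*(1-x) \<and> fS u v (1-2*x) = 0"
proof -
  have k1: "(1-a)*x + a*u*y*(1-y) = x \<longleftrightarrow> x = u*y*(1-y)"
  proof -
    have "(1-a)*x + a*u*y*(1-y) - x = a*(u*y*(1-y) - x)" by algebra
    then show ?thesis using a0 by auto
  qed
  have k2: "(1-a)*y + a*v*x*(1-x) = y \<longleftrightarrow> y = v*x*(1-x)"
  proof -
    have "(1-a)*y + a*v*x*(1-x) - y = a*(v*x*(1-x) - y)" by algebra
    then show ?thesis using a0 by auto
  qed
  have ke: "is_equilibrium u v a (x,y) \<longleftrightarrow> x = u*y*(1-y) \<and> y = v*x*(1-x)"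
    unfolding is_equilibrium_def kopel_def using k1 k2 by auto
  have hf: "fS u v (1-2*x) = 8*(u*v*(1-x)*(1-v*x*(1-x)) - 1)"
    unfolding fS_def by algebra
  show ?thesis
  proof
    assume h: "is_equilibrium u v a (x,y) \<and> positive_point (x,y)"
    have ee: "x = u*y*(1-y) \<and> y = v*x*(1-x)" using h ke by blast
    have e1: "x = u*y*(1-y)" using ee by (rule conjunct1)
    have e2: "y = v*x*(1-x)" using ee by (rule conjunct2)
    have x0: "x > 0" using h unfolding positive_point_def by simp
    have "x * 1 = x * (u*v*(1-x)*(1-y))"
    proof -
      have "x * (u*v*(1-x)*(1-y)) = u*(v*x*(1-x))*(1-y)" by (simp add: algebra_simps)
      also have "\<dots> = u*y*(1-y)" by (simp only: e2[symmetric])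
      also have "\<dots> = x" by (rule e1[symmetric])
      finally show ?thesis by simp
    qed
    then have "u*v*(1-x)*(1-y) = 1" using x0 by (metis mult_left_cancel less_irrefl)
    then show "y = v*x*(1-x) \<and> fS u v (1-2*x) = 0" using e2 hf by simp
  next
    assume h: "y = v*x*(1-x) \<and> fS u v (1-2*x) = 0"
    then have e2: "y = v*x*(1-x)" and f: "fS u v (1-2*x) = 0" by auto
    have r: "-1 < 1-2*x" "1-2*x < 1" using root_range[OF u0 v0 uv f] by auto
    then have x0: "0 < x" "x < 1" by auto
    have y0: "y > 0" using e2 x0 v0 by simp
    have one: "u*v*(1-x)*(1-y) = 1" using hf f e2 by simp
    have "x * (u*v*(1-x)*(1-y)) = u*(v*x*(1-x))*(1-y)" by (simp add: algebra_simps)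
    also have "\<dots> = u*y*(1-y)" by (simp only: e2[symmetric])
    finally have ch: "x * (u*v*(1-x)*(1-y)) = u*y*(1-y)" .
    have "x = x * (u*v*(1-x)*(1-y))" by (simp only: one mult_1_right)
    then have "x = u*y*(1-y)" using ch by simp
    then have "is_equilibrium u v a (x,y)" using ke e2 by blast
    moreover have "positive_point (x,y)" unfolding positive_point_def using x0 y0 by simp
    ultimately show "is_equilibrium u v a (x,y) \<and> positive_point (x,y)" by blast
  qed
qed

lemma fS_cont: "isCont (fS u v) x"
  unfolding fS_def by (intro continuous_intros)

lemma root_exists:
  assumes u0: "u > 0" and v0: "v > 0" and uv: "u*v > 1"
  shows "\<exists>s. fS u v s = 0"
proof -
  have "fS u v (-1) \<le> 0" unfolding fS_def by simp
  moreover have "0 \<le> fS u v 1" unfolding fS_def using uv by simp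
  ultimately obtain s where "fS u v s = 0" using IVT[of "fS u v" "-1" 0 1] fS_cont by auto
  then show ?thesis by blast
qed

lemma dq_nz:
  assumes "fS u v s = 0" and "R1 u v \<noteq> 0"
  shows "dq v s \<noteq> 0"
  using L3[OF assms(1)] assms(2) by auto

lemma discq_sign:
  assumes "fS u v s = 0"
  shows "R1 u v < 0 \<Longrightarrow> discq v s < 0" and "R1 u v > 0 \<Longrightarrow> discq v s > 0"
proof -
  have e: "discq v s * ((dq v s)^2 * u^2) = 64 * R1 u v" using L3[OF assms] by (simp add: algebra_simps)
  have nn: "(dq v s)^2 * u^2 \<ge> 0" by simp
  show "R1 u v < 0 \<Longrightarrow> discq v s < 0"
  proof (rule ccontr)
    assume "R1 u v < 0" "\<not> discq v s < 0"
    then have "discq v s * ((dq v s)^2 * u^2) \<ge> 0" using nn by simp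
    then show False using e \<open>R1 u v < 0\<close> by simp
  qed
  show "R1 u v > 0 \<Longrightarrow> discq v s > 0"
  proof (rule ccontr)
    assume "R1 u v > 0" "\<not> discq v s > 0"
    then have "discq v s * ((dq v s)^2 * u^2) \<le> 0" using nn by (simp add: mult_nonpos_nonneg)
    then show False using e \<open>R1 u v > 0\<close> by simp
  qed
qed

lemma neg_prod:
  assumes u0: "u > 0" and v0: "v > 0" and uv: "u*v > 1" and a0: "0 < a"
    and f: "fS u v s = 0" and d: "dq v s \<noteq> 0" and g: "Gh v a s \<noteq> 0"
    and nb: "\<not> (dq v s > 0 \<and> Gh v a s > 0)"
  shows "dq v s * Gh v a s < 0"
proof (cases "dq v s > 0")
  case True
  then have "Gh v a s < 0" using nb g by auto
  then show ?thesis using True by (simp add: mult_pos_neg)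
next
  case False
  then have "dq v s < 0" using d by simp
  moreover have "Gh v a s > 0" using dq_neg[OF u0 v0 uv a0 f] calculation by simp
  ultimately show ?thesis by (simp add: mult_neg_pos)
qed

lemma good_unique:
  assumes u0: "u > 0" and v0: "v > 0" and a0: "0 < a" and a1: "a \<le> 1" and uv: "u*v > 1"
    and hyp: "(R1 u v < 0 \<and> H3 u v a > 0) \<or> (R1 u v > 0 \<and> H3 u v a < 0)"
  shows "\<exists>!s. fS u v s = 0 \<and> dq v s > 0 \<and> Gh v a s > 0"
proof -
  obtain s0 where f0: "fS u v s0 = 0" using root_exists[OF u0 v0 uv] by blast
  have R0: "R1 u v \<noteq> 0" using hyp by auto
  show ?thesis
  proof (cases "R1 u v < 0 \<and> H3 u v a > 0")
    case True
    then have R: "R1 u v < 0" and H: "H3 u v a > 0" by auto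
    have dneg: "discq v s < 0" if "fS u v s = 0" for s using discq_sign(1)[OF that R] .
    show ?thesis
    proof (rule ex_ex1I)
      have "4*v*qq v s0 s0 > 0" unfolding L2 using dneg[OF f0] zero_le_power2[of "2*v*s0 + v*(1+s0)"] by linarith
      then have d0: "dq v s0 > 0" unfolding dq_qq using v0 by (simp add: zero_less_mult_iff)
      have "discq v s0 * (g1 v a s0)^2 \<le> 0" using dneg[OF f0] by (simp add: mult_nonpos_nonneg)
      then have "4*v*NN v a s0 \<ge> 0" unfolding L6
        using zero_le_power2[of "2*v*g0 v a s0 - v*(1+s0)*g1 v a s0"] by linarith
      then have N0: "NN v a s0 \<ge> 0" using v0 by (simp add: zero_le_mult_iff)
      have e: "Gh v a s0 * (NN v a s0 * u^3 * v^2) = 512 * H3 u v a" using L5[OF f0, of a] by (simp add: algebra_simps)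
      have g0: "Gh v a s0 > 0"
      proof (rule ccontr)
        assume "\<not> Gh v a s0 > 0"
        moreover have "NN v a s0 * u^3 * v^2 \<ge> 0" using N0 u0 v0 by simp
        ultimately have "Gh v a s0 * (NN v a s0 * u^3 * v^2) \<le> 0" by (simp add: mult_nonpos_nonneg)
        then show False using e H by simp
      qed
      show "\<exists>s. fS u v s = 0 \<and> dq v s > 0 \<and> Gh v a s > 0" using f0 d0 g0 by blast
    next
      fix s1 s2
      assume h1: "fS u v s1 = 0 \<and> dq v s1 > 0 \<and> Gh v a s1 > 0" and h2: "fS u v s2 = 0 \<and> dq v s2 > 0 \<and> Gh v a s2 > 0"
      show "s1 = s2"
      proof (rule ccontr)
        assume ne: "s1 \<noteq> s2"
        have "u*v*(s2 - s1)*qq v s1 s2 = 0" using L1[of u v s2 s1] h1 h2 by simp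
        then have q2: "qq v s1 s2 = 0" using u0 v0 ne by simp
        have "0 = (2*v*s2 + v*(1+s1))^2 - discq v s1" using L2[of v s1 s2] q2 by simp
        moreover have "discq v s1 < 0" using dneg h1 by blast
        moreover have "(2*v*s2 + v*(1+s1))^2 \<ge> 0" by simp
        ultimately show False by linarith
      qed
    qed
  next
    case False
    then have R: "R1 u v > 0" and H: "H3 u v a < 0" using hyp by auto
    have Gprod: "Gh v a s1 * Gh v a s2 * Gh v a (-1-s1-s2) < 0"
      if "fS u v s1 = 0" "fS u v s2 = 0" "s1 \<noteq> s2" for s1 s2
    proof -
      have "Gh v a s1 * Gh v a s2 * Gh v a (-1-s1-s2) * (v^3*u^3) = 512 * H3 u v a"
        using three(3)[OF u0 v0 that(1,2) dq_nz[OF that(1) R0] dq_nz[OF that(2) R0] that(3)] .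
      moreover have "v^3*u^3 > 0" using u0 v0 by simp
      ultimately show ?thesis using H
        by (metis less_le_not_le mult_nonneg_nonneg not_le zero_less_numeral mult_pos_neg linorder_not_less)
    qed
    show ?thesis
    proof (rule ex_ex1I)
      have dp: "discq v s0 > 0" using discq_sign(2)[OF f0 R] .
      define z where "z = (sqrt (discq v s0) - v*(1+s0))/(2*v)"
      have "2*v*z + v*(1+s0) = sqrt (discq v s0)" unfolding z_def using v0 by (simp add: field_simps)
      then have "4*v*qq v s0 z = 0" unfolding L2 using dp by simp
      then have qz: "qq v s0 z = 0" using v0 by simp
      have fz: "fS u v z = 0" using L1[of u v z s0] f0 qz by simp
      have nz: "s0 \<noteq> z" using qz dq_nz[OF f0 R0] dq_qq[of v s0] by auto
      define s3 where "s3 = -1-s0-z"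
      have f3: "fS u v s3 = 0" and dprod: "dq v s0 * dq v z * dq v s3 < 0"
        using three(1,2)[OF u0 v0 f0 fz dq_nz[OF f0 R0] dq_nz[OF fz R0] nz] unfolding s3_def by auto
      have gprod: "Gh v a s0 * Gh v a z * Gh v a s3 < 0" using Gprod[OF f0 fz nz] unfolding s3_def .
      show "\<exists>s. fS u v s = 0 \<and> dq v s > 0 \<and> Gh v a s > 0"
      proof (rule ccontr)
        assume nb: "\<not> (\<exists>s. fS u v s = 0 \<and> dq v s > 0 \<and> Gh v a s > 0)"
        have gnz: "Gh v a s0 \<noteq> 0" "Gh v a z \<noteq> 0" "Gh v a s3 \<noteq> 0" using gprod by auto
        have n1: "dq v s0 * Gh v a s0 < 0" using neg_prod[OF u0 v0 uv a0 f0 dq_nz[OF f0 R0] gnz(1)] nb f0 by blast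
        have n2: "dq v z * Gh v a z < 0" using neg_prod[OF u0 v0 uv a0 fz dq_nz[OF fz R0] gnz(2)] nb fz by blast
        have n3: "dq v s3 * Gh v a s3 < 0" using neg_prod[OF u0 v0 uv a0 f3 dq_nz[OF f3 R0] gnz(3)] nb f3 by blast
        have "(dq v s0 * Gh v a s0) * (dq v z * Gh v a z) > 0" using n1 n2 by (rule mult_neg_neg)
        then have "(dq v s0 * Gh v a s0) * (dq v z * Gh v a z) * (dq v s3 * Gh v a s3) < 0" using n3 by (rule mult_pos_neg)
        moreover have "(dq v s0 * dq v z * dq v s3) * (Gh v a s0 * Gh v a z * Gh v a s3) > 0"
          using dprod gprod by (rule mult_neg_neg)
        ultimately show False by (simp add: algebra_simps)
      qed
    next
      fix s1 s2
      assume h1: "fS u v s1 = 0 \<and> dq v s1 > 0 \<and> Gh v a s1 > 0" and h2: "fS u v s2 = 0 \<and> dq v s2 > 0 \<and> Gh v a s2 > 0"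
      show "s1 = s2"
      proof (rule ccontr)
        assume ne: "s1 \<noteq> s2"
        have f1: "fS u v s1 = 0" and f2: "fS u v s2 = 0" using h1 h2 by auto
        have f3: "fS u v (-1-s1-s2) = 0" and dprod: "dq v s1 * dq v s2 * dq v (-1-s1-s2) < 0"
          using three(1,2)[OF u0 v0 f1 f2 dq_nz[OF f1 R0] dq_nz[OF f2 R0] ne] by auto
        have "dq v s1 * dq v s2 > 0" using h1 h2 by simp
        then have "dq v (-1-s1-s2) < 0" using dprod h1 h2 by (auto simp: mult_less_0_iff)
        then have "Gh v a (-1-s1-s2) > 0" using dq_neg[OF u0 v0 uv a0 f3] by simp
        moreover have "Gh v a s1 * Gh v a s2 > 0" using h1 h2 by simp
        ultimately have "Gh v a s1 * Gh v a s2 * Gh v a (-1-s1-s2) > 0" by simp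
        then show False using Gprod[OF f1 f2 ne] by simp
      qed
    qed
  qed
qed


theorem theorem3:
  fixes u v a :: real
  assumes "u > 0" and "v > 0" and "0 < a" and "a \<le> 1"
    and "(u * v > 1 \<and> R1 u v < 0 \<and> H3 u v a > 0) \<or> (u * v > 1 \<and> R1 u v > 0 \<and> H3 u v a < 0)"
  shows "\<exists>!p. is_equilibrium u v a p \<and> positive_point p \<and> locally_stable u v a p"
proof -
  note u0 = assms(1) and v0 = assms(2) and a0 = assms(3) and a1 = assms(4)
  have uv: "u*v > 1" using assms(5) by auto
  have hyp: "(R1 u v < 0 \<and> H3 u v a > 0) \<or> (R1 u v > 0 \<and> H3 u v a < 0)" using assms(5) by auto
  define good where "good s \<longleftrightarrow> fS u v s = 0 \<and> dq v s > 0 \<and> Gh v a s > 0" for s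
  have char: "(is_equilibrium u v a (x,y) \<and> positive_point (x,y) \<and> locally_stable u v a (x,y))
      \<longleftrightarrow> (good (1-2*x) \<and> y = v*x*(1-x))" for x y
  proof
    assume h: "is_equilibrium u v a (x,y) \<and> positive_point (x,y) \<and> locally_stable u v a (x,y)"
    then have ey: "y = v*x*(1-x)" and f: "fS u v (1-2*x) = 0" using eq_char[OF u0 v0 a0 uv] by auto
    have px: "(1-(1-2*x))/2 = x" by simp
    have "locally_stable u v a ((1-(1-2*x))/2, v*((1-(1-2*x))/2)*(1-(1-(1-2*x))/2))"
      unfolding px using h ey by simp
    then have "dq v (1-2*x) > 0 \<and> Gh v a (1-2*x) > 0" using stab_s[OF u0 v0 uv a0 a1 f] by simp
    then show "good (1-2*x) \<and> y = v*x*(1-x)" using f ey unfolding good_def by simp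
  next
    assume h: "good (1-2*x) \<and> y = v*x*(1-x)"
    then have ey: "y = v*x*(1-x)" and f: "fS u v (1-2*x) = 0" and g: "dq v (1-2*x) > 0 \<and> Gh v a (1-2*x) > 0"
      unfolding good_def by auto
    have px: "(1-(1-2*x))/2 = x" by simp
    have "locally_stable u v a ((1-(1-2*x))/2, v*((1-(1-2*x))/2)*(1-(1-(1-2*x))/2))"
      using stab_s[OF u0 v0 uv a0 a1 f] g by simp
    then have "locally_stable u v a (x,y)" unfolding px using ey by simp
    moreover have "is_equilibrium u v a (x,y) \<and> positive_point (x,y)" using eq_char[OF u0 v0 a0 uv] ey f by simp
    ultimately show "is_equilibrium u v a (x,y) \<and> positive_point (x,y) \<and> locally_stable u v a (x,y)" by simp
  qed
  obtain s where gs: "good s" and su: "\<And>s'. good s' \<Longrightarrow> s' = s"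
    using good_unique[OF u0 v0 a0 a1 uv hyp] unfolding good_def[symmetric] by blast
  define x0 where "x0 = (1-s)/2"
  have hx0: "1 - 2*x0 = s" unfolding x0_def by (simp add: field_simps)
  show ?thesis
  proof (rule ex1I[of _ "(x0, v*x0*(1-x0))"])
    show "is_equilibrium u v a (x0, v*x0*(1-x0)) \<and> positive_point (x0, v*x0*(1-x0)) \<and> locally_stable u v a (x0, v*x0*(1-x0))"
      using char[of x0 "v*x0*(1-x0)"] gs hx0 by simp
  next
    fix p
    assume hp: "is_equilibrium u v a p \<and> positive_point p \<and> locally_stable u v a p"
    obtain x y where p: "p = (x,y)" by (cases p)
    have "good (1-2*x) \<and> y = v*x*(1-x)" using char[of x y] hp p by simp
    then have "1-2*x = s" and ey: "y = v*x*(1-x)" using su by auto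
    then have "x = x0" unfolding x0_def by simp
    then show "p = (x0, v*x0*(1-x0))" using p ey by simp
  qed
qed

end
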